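(* Let $\mathbb{C}$ be a locally small category and $\mathbb{C}_{\mathit{fin}}$ a full subcategory satisfying (C1)–(C5) below. Let $U:\mathbb{C}^*\to\mathbb{C}$ be a reasonable expansion with unique restrictions. Let $F$ be a locally finite homogeneous object in $\mathbb{C}$ and assume that $U^{-1}(F)$ is compact with respect to the topology $\sigma_F$. Let $G=\mathrm{Aut}(F)$ and let $\mathcal{F}\in U^{-1}(F)$ be arbitrary. Then $U$ restricted to (the full subcategory spanned by) $\mathrm{Age}(\mathcal{F})$, as a functor into (the full subcategory spanned by) $\mathrm{Age}(F)$, has the expansion property if and only if $\mathrm{Age}(\mathcal{F})\subseteq\mathrm{Age}(\mathcal{F}')$ for all $\mathcal{F}'\in\overline{\mathcal{F}^G}$.
   Context: Write $A\to B$ if $\hom(A,B)\ne\varnothing$. Conditions: (C1) all morphisms of $\mathbb{C}$ are monomorphisms; (C2) $\mathrm{Ob}(\mathbb{C}_{\mathit{fin}})$ is a set; (C3) $\hom(A,B)$ is finite for $A,B\in\mathrm{Ob}(\mathbb{C}_{\mathit{fin}})$; (C4) for every $F\in\mathrm{Ob}(\mathbb{C})$ there is $A\in\mathrm{Ob}(\mathbb{C}_{\mathit{fin}})$ with $A\to F$; (C5) for every $B\in\mathrm{Ob}(\mathbb{C}_{\mathit{fin}})$ the set $\{A\in\mathrm{Ob}(\mathbb{C}_{\mathit{fin}}):A\to B\}$ is finite. $\mathrm{Age}(F)=\{A\in\mathrm{Ob}(\mathbb{C}_{\mathit{fin}}):A\to F\}$. $F$ is homogeneous if for all $A\in\mathrm{Ob}(\mathbb{C}_{\mathit{fin}})$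 and $e_1,e_2\in\hom(A,F)$ there is $g\in\mathrm{Aut}(F)$ with $g\cdot e_1=e_2$. $F$ is locally finite if for all $A,B\in\mathrm{Ob}(\mathbb{C}_{\mathit{fin}})$, $e\in\hom(A,F)$, $f\in\hom(B,F)$ there exist $D\in\mathrm{Ob}(\mathbb{C}_{\mathit{fin}})$, $r\in\hom(D,F)$, $p\in\hom(A,D)$, $q\in\hom(B,D)$ with $r\cdot p=e$, $r\cdot q=f$, such that for every $H\in\mathrm{Ob}(\mathbb{C})$, $r'\in\hom(H,F)$, $p'\in\hom(A,H)$, $q'\in\hom(B,H)$ with $r'\cdot p'=e$, $r'\cdot q'=f$ there is $s\in\hom(D,H)$ with $r'\cdot s=r$, $s\cdot p=p'$, $s\cdot q=q'$. An expansion of $\mathbb{C}$ is a locally small category $\mathbb{C}^*$ with a functor $U:\mathbb{C}^*\to\mathbb{C}$ surjective on objects and injective on hom-sets; we regard $\hom_{\mathbb{C}^*}(\mathcal{A},\mathcal{B})\subseteq\hom_{\mathbb{C}}(U\mathcal{A},U\mathcal{B})$, and $U^{-1}(A)=\{\mathcal{A}:U(\mathcal{A})=A\}$. $U$ is reasonable if for every $e\in\hom(A,B)$ and $\mathcal{A}\in U^{-1}(A)$ there is $\mathcal{B}\in U^{-1}(B)$ with $e\in\hom(\mathcal{A},\mathcal{B})$; it has unique restrictions if for every $\mathcal{B}$ and $e\in\hom(A,U(\mathcal{B}))$ there is exactly one $\mathcal{A}\in U^{-1}(A)$ with $e\in\hom(\mathcal{A},\mathcal{B})$. $\mathbb{C}^*_{\mathit{fin}}$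 is the full subcategory of $\mathbb{C}^*$ on $\bigcup\{U^{-1}(A):A\in\mathrm{Ob}(\mathbb{C}_{\mathit{fin}})\}$, and $\mathrm{Age}(\mathcal{F})=\{\mathcal{A}\in\mathrm{Ob}(\mathbb{C}^*_{\mathit{fin}}):\mathcal{A}\to\mathcal{F}\}$. The restricted functor has the expansion property if for every $A\in\mathrm{Age}(F)$ there is $B\in\mathrm{Age}(F)$ such that $\mathcal{A}\to\mathcal{B}$ for all $\mathcal{A},\mathcal{B}\in\mathrm{Age}(\mathcal{F})$ with $U(\mathcal{A})=A$, $U(\mathcal{B})=B$. For $g\in G$, $\mathcal{F}^g$ is the unique $\mathcal{F}'\in U^{-1}(F)$ with $g^{-1}\in\hom(\mathcal{F},\mathcal{F}')$, and $\mathcal{F}^G=\{\mathcal{F}^g:g\in G\}$. $\sigma_F$ is the topology on $U^{-1}(F)$ generated by the sets $N(e,\mathcal{A})=\{\mathcal{F}\in U^{-1}(F):e\in\hom(\mathcal{A},\mathcal{F})\}$, $\mathcal{A}\in\mathrm{Ob}(\mathbb{C}^*_{\mathit{fin}})$, $e\in\hom(U(\mathcal{A}),F)$; $\overline{\mathcal{F}^G}$ is the closure in $\sigma_F$. *)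

theory Defs
  imports "HOL-Analysis.Analysis"
begin

text \<open>A (locally small) category presented by its hom-sets: objects of type 'o,
  morphisms of type 'm; comp g f is g after f.\<close>

record ('o,'m) cat =
  Ob :: "'o set"
  Hom :: "'o \<Rightarrow> 'o \<Rightarrow> 'm set"
  comp :: "'m \<Rightarrow> 'm \<Rightarrow> 'm"
  idm :: "'o \<Rightarrow> 'm"

definition is_cat :: "('o,'m) cat \<Rightarrow> bool" where
  "is_cat C \<longleftrightarrow>
     (\<forall>A B. (A \<notin> Ob C \<or> B \<notin> Ob C) \<longrightarrow> Hom C A B = {}) \<and>
     (\<forall>A\<in>Ob C. idm C A \<in> Hom C A A) \<and>
     (\<forall>A B D f g. f \<in> Hom C A B \<longrightarrow> g \<in> Hom C B D \<longrightarrow> comp C g f \<in> Hom C A D) \<and>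
     (\<forall>A B D E f g h. f \<in> Hom C A B \<longrightarrow> g \<in> Hom C B D \<longrightarrow> h \<in> Hom C D E \<longrightarrow>
        comp C h (comp C g f) = comp C (comp C h g) f) \<and>
     (\<forall>A B f. f \<in> Hom C A B \<longrightarrow> comp C (idm C B) f = f \<and> comp C f (idm C A) = f)"

definition arr :: "('o,'m) cat \<Rightarrow> 'o \<Rightarrow> 'o \<Rightarrow> bool" where
  "arr C A B \<longleftrightarrow> Hom C A B \<noteq> {}"

definition all_mono :: "('o,'m) cat \<Rightarrow> bool" where
  "all_mono C \<longleftrightarrow> (\<forall>A B X f g h. f \<in> Hom C A B \<longrightarrow> g \<in> Hom C X A \<longrightarrow> h \<in> Hom C X A \<longrightarrow>
      comp C f g = comp C f h \<longrightarrow> g = h)"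

text \<open>Conditions (C1)--(C5) for the full subcategory of C on the object set Obf.
  (C2) is automatic in HOL (every collection of objects is a set).\<close>
definition fin_conditions :: "('o,'m) cat \<Rightarrow> 'o set \<Rightarrow> bool" where
  "fin_conditions C Obf \<longleftrightarrow>
     Obf \<subseteq> Ob C \<and>
     all_mono C \<and>
     (\<forall>A\<in>Obf. \<forall>B\<in>Obf. finite (Hom C A B)) \<and>
     (\<forall>F\<in>Ob C. \<exists>A\<in>Obf. arr C A F) \<and>
     (\<forall>B\<in>Obf. finite {A\<in>Obf. arr C A B})"

definition Age :: "('o,'m) cat \<Rightarrow> 'o set \<Rightarrow> 'o \<Rightarrow> 'o set" where
  "Age C Obf F = {A\<in>Obf. arr C A F}"

definition Aut :: "('o,'m) cat \<Rightarrow> 'o \<Rightarrow> 'm set" where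
  "Aut C F = {g\<in>Hom C F F. \<exists>h\<in>Hom C F F. comp C h g = idm C F \<and> comp C g h = idm C F}"

definition aut_inv :: "('o,'m) cat \<Rightarrow> 'o \<Rightarrow> 'm \<Rightarrow> 'm" where
  "aut_inv C F g = (THE h. h \<in> Hom C F F \<and> comp C h g = idm C F \<and> comp C g h = idm C F)"

definition homogeneous :: "('o,'m) cat \<Rightarrow> 'o set \<Rightarrow> 'o \<Rightarrow> bool" where
  "homogeneous C Obf F \<longleftrightarrow>
     (\<forall>A\<in>Obf. \<forall>e1\<in>Hom C A F. \<forall>e2\<in>Hom C A F. \<exists>g\<in>Aut C F. comp C g e1 = e2)"

definition locally_finite :: "('o,'m) cat \<Rightarrow> 'o set \<Rightarrow> 'o \<Rightarrow> bool" where
  "locally_finite C Obf F \<longleftrightarrow>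
     (\<forall>A\<in>Obf. \<forall>B\<in>Obf. \<forall>e\<in>Hom C A F. \<forall>f\<in>Hom C B F.
        (\<exists>D\<in>Obf. \<exists>r\<in>Hom C D F. \<exists>p\<in>Hom C A D. \<exists>q\<in>Hom C B D.
           comp C r p = e \<and> comp C r q = f \<and>
           (\<forall>H\<in>Ob C. \<forall>r'\<in>Hom C H F. \<forall>p'\<in>Hom C A H. \<forall>q'\<in>Hom C B H.
              comp C r' p' = e \<and> comp C r' q' = f \<longrightarrow>
              (\<exists>s\<in>Hom C D H. comp C r' s = r \<and> comp C s p = p' \<and> comp C s q = q'))))"

text \<open>An expansion U : Cs \<rightarrow> C: a functor surjective on objects with
  Hom Cs a b \<subseteq> Hom C (U a) (U b) (hence injective on hom-sets), composition and
  identities inherited from C.\<close>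
definition expansion :: "('x,'m) cat \<Rightarrow> ('x \<Rightarrow> 'o) \<Rightarrow> ('o,'m) cat \<Rightarrow> bool" where
  "expansion Cs U C \<longleftrightarrow>
     is_cat Cs \<and>
     U ` Ob Cs = Ob C \<and>
     (\<forall>a b. Hom Cs a b \<subseteq> Hom C (U a) (U b)) \<and>
     (\<forall>a b c f g. f \<in> Hom Cs a b \<longrightarrow> g \<in> Hom Cs b c \<longrightarrow> comp Cs g f = comp C g f) \<and>
     (\<forall>a\<in>Ob Cs. idm Cs a = idm C (U a))"

definition Uinv :: "('x,'m) cat \<Rightarrow> ('x \<Rightarrow> 'o) \<Rightarrow> 'o \<Rightarrow> 'x set" where
  "Uinv Cs U A = {a\<in>Ob Cs. U a = A}"

definition reasonable :: "('x,'m) cat \<Rightarrow> ('x \<Rightarrow> 'o) \<Rightarrow> ('o,'m) cat \<Rightarrow> bool" where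
  "reasonable Cs U C \<longleftrightarrow>
     (\<forall>A B e a. e \<in> Hom C A B \<longrightarrow> a \<in> Uinv Cs U A \<longrightarrow>
        (\<exists>b\<in>Uinv Cs U B. e \<in> Hom Cs a b))"

definition unique_restrictions :: "('x,'m) cat \<Rightarrow> ('x \<Rightarrow> 'o) \<Rightarrow> ('o,'m) cat \<Rightarrow> bool" where
  "unique_restrictions Cs U C \<longleftrightarrow>
     (\<forall>b\<in>Ob Cs. \<forall>A. \<forall>e\<in>Hom C A (U b). \<exists>!a. a \<in> Uinv Cs U A \<and> e \<in> Hom Cs a b)"

definition Ob_fin_exp :: "('x,'m) cat \<Rightarrow> ('x \<Rightarrow> 'o) \<Rightarrow> 'o set \<Rightarrow> 'x set" where
  "Ob_fin_exp Cs U Obf = {a\<in>Ob Cs. U a \<in> Obf}"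

definition Age_exp :: "('x,'m) cat \<Rightarrow> ('x \<Rightarrow> 'o) \<Rightarrow> 'o set \<Rightarrow> 'x \<Rightarrow> 'x set" where
  "Age_exp Cs U Obf Fs = {a\<in>Ob_fin_exp Cs U Obf. arr Cs a Fs}"

definition expansion_property ::
  "('x,'m) cat \<Rightarrow> ('x \<Rightarrow> 'o) \<Rightarrow> ('o,'m) cat \<Rightarrow> 'o set \<Rightarrow> 'x \<Rightarrow> bool" where
  "expansion_property Cs U C Obf Fs \<longleftrightarrow>
     (\<forall>A\<in>Age C Obf (U Fs). \<exists>B\<in>Age C Obf (U Fs).
        \<forall>a\<in>Age_exp Cs U Obf Fs. \<forall>b\<in>Age_exp Cs U Obf Fs.
          U a = A \<longrightarrow> U b = B \<longrightarrow> arr Cs a b)"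

definition exp_act :: "('x,'m) cat \<Rightarrow> ('x \<Rightarrow> 'o) \<Rightarrow> ('o,'m) cat \<Rightarrow> 'x \<Rightarrow> 'm \<Rightarrow> 'x" where
  "exp_act Cs U C Fs g =
     (THE Fs'. Fs' \<in> Uinv Cs U (U Fs) \<and> aut_inv C (U Fs) g \<in> Hom Cs Fs Fs')"

definition orbit_exp :: "('x,'m) cat \<Rightarrow> ('x \<Rightarrow> 'o) \<Rightarrow> ('o,'m) cat \<Rightarrow> 'x \<Rightarrow> 'x set" where
  "orbit_exp Cs U C Fs = (\<lambda>g. exp_act Cs U C Fs g) ` Aut C (U Fs)"

definition Nbhd :: "('x,'m) cat \<Rightarrow> ('x \<Rightarrow> 'o) \<Rightarrow> 'o \<Rightarrow> 'm \<Rightarrow> 'x \<Rightarrow> 'x set" where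
  "Nbhd Cs U F e a = {Fs\<in>Uinv Cs U F. e \<in> Hom Cs a Fs}"

definition sigma_top ::
  "('x,'m) cat \<Rightarrow> ('x \<Rightarrow> 'o) \<Rightarrow> ('o,'m) cat \<Rightarrow> 'o set \<Rightarrow> 'o \<Rightarrow> 'x topology" where
  "sigma_top Cs U C Obf F = topology_generated_by
     (insert (Uinv Cs U F)
        {Nbhd Cs U F e a | e a. a \<in> Ob_fin_exp Cs U Obf \<and> e \<in> Hom C (U a) F})"

end

theory Submission
  imports Defs
begin

lemma cat_hom_ob: "is_cat C \<Longrightarrow> f \<in> Hom C A B \<Longrightarrow> A \<in> Ob C \<and> B \<in> Ob C"
  unfolding is_cat_def by blast

lemma cat_id: "is_cat C \<Longrightarrow> A \<in> Ob C \<Longrightarrow> idm C A \<in> Hom C A A"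
  unfolding is_cat_def by blast

lemma cat_comp: "is_cat C \<Longrightarrow> f \<in> Hom C A B \<Longrightarrow> g \<in> Hom C B D \<Longrightarrow> comp C g f \<in> Hom C A D"
  unfolding is_cat_def by blast

lemma cat_assoc: "is_cat C \<Longrightarrow> f \<in> Hom C A B \<Longrightarrow> g \<in> Hom C B D \<Longrightarrow> h \<in> Hom C D E \<Longrightarrow>
   comp C h (comp C g f) = comp C (comp C h g) f"
  unfolding is_cat_def by blast

lemma cat_idl: "is_cat C \<Longrightarrow> f \<in> Hom C A B \<Longrightarrow> comp C (idm C B) f = f"
  unfolding is_cat_def by blast

lemma cat_idr: "is_cat C \<Longrightarrow> f \<in> Hom C A B \<Longrightarrow> comp C f (idm C A) = f"
  unfolding is_cat_def by blast

lemma aut_inv_props: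
  assumes C: "is_cat C" and g: "g \<in> Aut C F"
  shows "aut_inv C F g \<in> Hom C F F \<and> comp C (aut_inv C F g) g = idm C F \<and> comp C g (aut_inv C F g) = idm C F"
proof -
  from g obtain h where gh: "g \<in> Hom C F F" "h \<in> Hom C F F" "comp C h g = idm C F" "comp C g h = idm C F"
    unfolding Aut_def by blast
  have uniq: "k = h" if k: "k \<in> Hom C F F" "comp C k g = idm C F" "comp C g k = idm C F" for k
  proof -
    have "k = comp C k (idm C F)" using cat_idr[OF C k(1)] by simp
    also have "\<dots> = comp C k (comp C g h)" using gh by simp
    also have "\<dots> = comp C (comp C k g) h" using cat_assoc[OF C gh(2) gh(1) k(1)] by simp
    also have "\<dots> = h" using k(2) cat_idl[OF C gh(2)] by simp
    finally show ?thesis .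
  qed
  have "aut_inv C F g = h"
    unfolding aut_inv_def
  proof (rule the_equality)
    show "h \<in> Hom C F F \<and> comp C h g = idm C F \<and> comp C g h = idm C F" using gh by blast
  next
    fix k assume "k \<in> Hom C F F \<and> comp C k g = idm C F \<and> comp C g k = idm C F"
    then show "k = h" using uniq by blast
  qed
  then show ?thesis using gh by simp
qed

lemma exp_basic:
  assumes "expansion Cs U C"
  shows "is_cat Cs" "Hom Cs a b \<subseteq> Hom C (U a) (U b)"
    "f \<in> Hom Cs a b \<Longrightarrow> g \<in> Hom Cs b c \<Longrightarrow> comp Cs g f = comp C g f"
    "a \<in> Ob Cs \<Longrightarrow> idm Cs a = idm C (U a)"
    "a \<in> Ob Cs \<Longrightarrow> U a \<in> Ob C"
  using assms unfolding expansion_def by auto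

lemma id_dom:
  assumes C: "is_cat C" and E: "expansion Cs U C" and UR: "unique_restrictions Cs U C"
    and X: "X \<in> Ob Cs" and a: "a \<in> Uinv Cs U (U X)" and h: "idm C (U X) \<in> Hom Cs a X"
  shows "a = X"
proof -
  have ide: "idm C (U X) \<in> Hom C (U X) (U X)" using cat_id[OF C exp_basic(5)[OF E X]] .
  have "idm C (U X) \<in> Hom Cs X X" using cat_id[OF exp_basic(1)[OF E] X] exp_basic(4)[OF E X] by simp
  moreover have "X \<in> Uinv Cs U (U X)" using X unfolding Uinv_def by simp
  moreover have "\<exists>!a. a \<in> Uinv Cs U (U X) \<and> idm C (U X) \<in> Hom Cs a X"
    using UR X ide unfolding unique_restrictions_def by blast
  ultimately show ?thesis using a h by blast
qed

lemma exp_act_props: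
  assumes C: "is_cat C" and E: "expansion Cs U C" and R: "reasonable Cs U C"
    and UR: "unique_restrictions Cs U C" and Fs: "Fs \<in> Uinv Cs U F" and g: "g \<in> Aut C F"
  shows "exp_act Cs U C Fs g \<in> Uinv Cs U F \<and> aut_inv C F g \<in> Hom Cs Fs (exp_act Cs U C Fs g)
     \<and> g \<in> Hom Cs (exp_act Cs U C Fs g) Fs"
proof -
  have UFs: "U Fs = F" and FsO: "Fs \<in> Ob Cs" using Fs unfolding Uinv_def by auto
  note ai = aut_inv_props[OF C g]
  have gH: "g \<in> Hom C F F" using g unfolding Aut_def by blast
  obtain a0 where a0: "a0 \<in> Uinv Cs U F" "g \<in> Hom Cs a0 Fs"
    using UR FsO gH UFs unfolding unique_restrictions_def by metis
  have key: "Y = a0 \<and> g \<in> Hom Cs Y Fs" if Y: "Y \<in> Uinv Cs U F" "aut_inv C F g \<in> Hom Cs Fs Y" for Y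
  proof -
    have YO: "Y \<in> Ob Cs" and UY: "U Y = F" using Y unfolding Uinv_def by auto
    have "comp Cs (aut_inv C F g) g \<in> Hom Cs a0 Y" using cat_comp[OF exp_basic(1)[OF E] a0(2) Y(2)] .
    moreover have "comp Cs (aut_inv C F g) g = idm C F" using exp_basic(3)[OF E a0(2) Y(2)] ai by simp
    ultimately have "idm C (U Y) \<in> Hom Cs a0 Y" using UY by simp
    then have "a0 = Y" using id_dom[OF C E UR YO] a0(1) UY by simp
    then show ?thesis using a0 by simp
  qed
  obtain Y where Y: "Y \<in> Uinv Cs U F" "aut_inv C F g \<in> Hom Cs Fs Y"
    using R ai Fs UFs unfolding reasonable_def by metis
  have "exp_act Cs U C Fs g = Y"
    unfolding exp_act_def UFs
    apply (rule the_equality)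
    using Y key by blast+
  then show ?thesis using Y key by auto
qed

lemma sigma_topspace: "topspace (sigma_top Cs U C Obf F) = Uinv Cs U F"
  unfolding sigma_top_def topology_generated_by_topspace Nbhd_def by auto

lemma sigma_open: "a \<in> Ob_fin_exp Cs U Obf \<Longrightarrow> e \<in> Hom C (U a) F \<Longrightarrow>
   openin (sigma_top Cs U C Obf F) (Nbhd Cs U F e a)"
  unfolding sigma_top_def by (rule topology_generated_by_Basis) blast

lemma finite_uinv:
  assumes E: "expansion Cs U C" and R: "reasonable Cs U C" and UR: "unique_restrictions Cs U C"
    and K: "compact_space (sigma_top Cs U C Obf F)"
    and A: "A \<in> Obf" and e0: "e0 \<in> Hom C A F"
  shows "finite (Uinv Cs U A)"
proof -
  let ?X = "sigma_top Cs U C Obf F"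
  let ?N = "\<lambda>a. Nbhd Cs U F e0 a"
  have op: "\<forall>B\<in>?N ` Uinv Cs U A. openin ?X B"
    using sigma_open[of _ Cs U Obf e0 C F] unfolding Uinv_def Ob_fin_exp_def using A e0 by auto
  have cov: "topspace ?X \<subseteq> \<Union>(?N ` Uinv Cs U A)"
  proof
    fix Y assume "Y \<in> topspace ?X"
    then have Y: "Y \<in> Uinv Cs U F" using sigma_topspace by metis
    then have "Y \<in> Ob Cs" "U Y = F" unfolding Uinv_def by auto
    then obtain a where "a \<in> Uinv Cs U A" "e0 \<in> Hom Cs a Y"
      using UR e0 unfolding unique_restrictions_def by metis
    then show "Y \<in> \<Union>(?N ` Uinv Cs U A)" using Y unfolding Nbhd_def by auto
  qed
  obtain FF where FF: "finite FF" "FF \<subseteq> ?N ` Uinv Cs U A" "topspace ?X \<subseteq> \<Union>FF"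
    using K op cov unfolding compact_space_def compactin_def by meson
  obtain S0 where S0: "S0 \<subseteq> Uinv Cs U A" "finite S0" "FF = ?N ` S0"
    using finite_subset_image[OF FF(1,2)] by blast
  have "Uinv Cs U A \<subseteq> S0"
  proof
    fix a assume a: "a \<in> Uinv Cs U A"
    then obtain Y where Y: "Y \<in> Uinv Cs U F" "e0 \<in> Hom Cs a Y"
      using R e0 unfolding reasonable_def by blast
    then have "Y \<in> topspace ?X" using sigma_topspace by metis
    then obtain a1 where a1: "a1 \<in> S0" "Y \<in> ?N a1" using FF(3) S0(3) by auto
    then have h1: "e0 \<in> Hom Cs a1 Y" "a1 \<in> Uinv Cs U A" using S0(1) unfolding Nbhd_def by auto
    have "Y \<in> Ob Cs" "U Y = F" using Y unfolding Uinv_def by auto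
    then have "\<exists>!a. a \<in> Uinv Cs U A \<and> e0 \<in> Hom Cs a Y"
      using UR e0 unfolding unique_restrictions_def by metis
    then have "a = a1" using a Y h1 by blast
    then show "a \<in> S0" using a1 by simp
  qed
  then show ?thesis using S0(2) finite_subset by blast
qed

lemma lf_iter:
  assumes C: "is_cat C" and LF: "locally_finite C Obf F" and A: "A \<in> Obf"
    and e0: "e0 \<in> Hom C A F" and fin: "finite EE" and sub: "EE \<subseteq> Hom C A F"
  shows "\<exists>B\<in>Obf. \<exists>f\<in>Hom C B F. \<forall>e\<in>EE. \<exists>p\<in>Hom C A B. e = comp C f p"
  using fin sub
proof (induction EE rule: finite_induct)
  case empty
  then show ?case using A e0 by blast
next
  case (insert e EE)
  then obtain B f where B: "B \<in> Obf" "f \<in> Hom C B F" "\<forall>e\<in>EE. \<exists>p\<in>Hom C A B. e = comp C f p"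
    by auto
  have eH: "e \<in> Hom C A F" using insert by auto
  obtain D r p q where D: "D \<in> Obf" "r \<in> Hom C D F" "p \<in> Hom C A D" "q \<in> Hom C B D"
    "comp C r p = e" "comp C r q = f"
    using LF A B(1,2) eH unfolding locally_finite_def by meson
  have "\<forall>e'\<in>insert e EE. \<exists>p'\<in>Hom C A D. e' = comp C r p'"
  proof
    fix e' assume "e' \<in> insert e EE"
    then show "\<exists>p'\<in>Hom C A D. e' = comp C r p'"
    proof
      assume "e' = e" then show ?thesis using D by blast
    next
      assume "e' \<in> EE"
      then obtain p' where p': "p' \<in> Hom C A B" "e' = comp C f p'" using B by blast
      have "e' = comp C r (comp C q p')" using p' D cat_assoc[OF C p'(1) D(4) D(2)] by simp
      moreover have "comp C q p' \<in> Hom C A D" using cat_comp[OF C p'(1) D(4)] .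
      ultimately show ?thesis by blast
    qed
  qed
  then show ?case using D by blast
qed

theorem proposition5p12:
  fixes C :: "('o,'m) cat" and Obf :: "'o set"
    and Cs :: "('x,'m) cat" and U :: "'x \<Rightarrow> 'o"
    and F :: 'o and Fs :: 'x
  assumes "is_cat C"
    and "fin_conditions C Obf"
    and "expansion Cs U C"
    and "reasonable Cs U C"
    and "unique_restrictions Cs U C"
    and "F \<in> Ob C"
    and "locally_finite C Obf F"
    and "homogeneous C Obf F"
    and "compact_space (sigma_top Cs U C Obf F)"
    and "Fs \<in> Uinv Cs U F"
  shows "expansion_property Cs U C Obf Fs \<longleftrightarrow>
    (\<forall>Fs' \<in> (sigma_top Cs U C Obf F) closure_of (orbit_exp Cs U C Fs).
        Age_exp Cs U Obf Fs \<subseteq> Age_exp Cs U Obf Fs')"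
proof -
  note C = assms(1) and E = assms(3) and R = assms(4) and UR = assms(5) and LF = assms(7)
    and HG = assms(8) and K = assms(9) and FsU = assms(10)
  let ?X = "sigma_top Cs U C Obf F"
  let ?O = "orbit_exp Cs U C Fs"
  let ?cl = "?X closure_of ?O"
  have UFs: "U Fs = F" and FsO: "Fs \<in> Ob Cs" using FsU unfolding Uinv_def by auto
  have Cs: "is_cat Cs" using exp_basic(1)[OF E] .
  have orb: "\<And>Y. Y \<in> ?O \<Longrightarrow> \<exists>g\<in>Aut C F. Y = exp_act Cs U C Fs g"
    unfolding orbit_exp_def UFs by blast
  have orb2: "\<And>g. g \<in> Aut C F \<Longrightarrow> exp_act Cs U C Fs g \<in> ?O"
    unfolding orbit_exp_def UFs by blast
  have ageF: "U a \<in> Age C Obf F" if "a \<in> Age_exp Cs U Obf Fs" for a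
  proof -
    from that have a: "a \<in> Ob Cs" "U a \<in> Obf" "Hom Cs a Fs \<noteq> {}"
      unfolding Age_exp_def Ob_fin_exp_def arr_def by auto
    then have "Hom C (U a) F \<noteq> {}" using exp_basic(2)[OF E, of a Fs] UFs by auto
    then show ?thesis using a unfolding Age_def arr_def by auto
  qed
  show ?thesis
  proof
    assume EP: "expansion_property Cs U C Obf Fs"
    show "\<forall>Fs' \<in> ?cl. Age_exp Cs U Obf Fs \<subseteq> Age_exp Cs U Obf Fs'"
    proof (intro ballI subsetI)
      fix Y a assume Y: "Y \<in> ?cl" and a: "a \<in> Age_exp Cs U Obf Fs"
      have YU: "Y \<in> Uinv Cs U F" using Y closure_of_subset_topspace sigma_topspace by fast
      then have YO: "Y \<in> Ob Cs" and UY: "U Y = F" unfolding Uinv_def by auto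
      obtain B where B: "B \<in> Age C Obf F"
        and EPB: "\<forall>a'\<in>Age_exp Cs U Obf Fs. \<forall>b\<in>Age_exp Cs U Obf Fs. U a' = U a \<longrightarrow> U b = B \<longrightarrow> arr Cs a' b"
        using EP ageF[OF a] UFs unfolding expansion_property_def by metis
      obtain f where f: "f \<in> Hom C B F" using B unfolding Age_def arr_def by auto
      obtain b where b: "b \<in> Uinv Cs U B" "f \<in> Hom Cs b Y"
        using UR YO f UY unfolding unique_restrictions_def by metis
      have bfin: "b \<in> Ob_fin_exp Cs U Obf" using b B unfolding Uinv_def Ob_fin_exp_def Age_def by auto
      have Ub: "U b = B" using b unfolding Uinv_def by auto
      have "openin ?X (Nbhd Cs U F f b)" using sigma_open[OF bfin] f Ub by simp
      moreover have "Y \<in> Nbhd Cs U F f b" using YU b unfolding Nbhd_def by auto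
      ultimately obtain Z where Z: "Z \<in> ?O" "Z \<in> Nbhd Cs U F f b"
        using Y unfolding closure_of_def by blast
      obtain g where g: "g \<in> Aut C F" "Z = exp_act Cs U C Fs g" using orb[OF Z(1)] by blast
      have gZ: "g \<in> Hom Cs Z Fs" using exp_act_props[OF C E R UR FsU g(1)] g(2) by simp
      have fZ: "f \<in> Hom Cs b Z" using Z(2) unfolding Nbhd_def by auto
      have "comp Cs g f \<in> Hom Cs b Fs" using cat_comp[OF Cs fZ gZ] .
      then have bA: "b \<in> Age_exp Cs U Obf Fs" using bfin unfolding Age_exp_def arr_def by auto
      have "arr Cs a b" using EPB a bA Ub by blast
      then obtain k where k: "k \<in> Hom Cs a b" unfolding arr_def by auto
      have "comp Cs f k \<in> Hom Cs a Y" using cat_comp[OF Cs k b(2)] .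
      then show "a \<in> Age_exp Cs U Obf Y" using a unfolding Age_exp_def arr_def by auto
    qed
  next
    assume H: "\<forall>Fs' \<in> ?cl. Age_exp Cs U Obf Fs \<subseteq> Age_exp Cs U Obf Fs'"
    show "expansion_property Cs U C Obf Fs"
    proof (rule ccontr)
      assume nEP: "\<not> expansion_property Cs U C Obf Fs"
      then obtain A where A: "A \<in> Age C Obf F"
        and nB: "\<forall>B\<in>Age C Obf F. \<exists>a\<in>Age_exp Cs U Obf Fs. \<exists>b\<in>Age_exp Cs U Obf Fs.
                    U a = A \<and> U b = B \<and> \<not> arr Cs a b"
        unfolding expansion_property_def UFs by blast
      obtain e0 where e0: "e0 \<in> Hom C A F" and AO: "A \<in> Obf" using A unfolding Age_def arr_def by auto
      let ?S = "{a \<in> Age_exp Cs U Obf Fs. U a = A}"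
      have Ssub: "?S \<subseteq> Uinv Cs U A" unfolding Age_exp_def Ob_fin_exp_def Uinv_def by auto
      have finS: "finite ?S"
        using finite_subset[OF Ssub finite_uinv[OF E R UR K AO e0]] .
      have clcomp: "compactin ?X ?cl"
        using K closedin_compact_space closedin_closure_of by blast
      have "\<exists>EE. finite EE \<and> EE \<subseteq> Hom C A F \<and> (\<forall>Y\<in>?cl. \<exists>e\<in>EE. e \<in> Hom Cs a Y)"
        if aS: "a \<in> ?S" for a
      proof -
        have afin: "a \<in> Ob_fin_exp Cs U Obf" and Ua: "U a = A"
          using aS unfolding Age_exp_def by auto
        let ?N = "\<lambda>e. Nbhd Cs U F e a"
        have op: "\<forall>B\<in>?N ` Hom C A F. openin ?X B" using sigma_open[OF afin] Ua by auto
        have cov: "?cl \<subseteq> \<Union>(?N ` Hom C A F)"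
        proof
          fix Y assume Y: "Y \<in> ?cl"
          have YU: "Y \<in> Uinv Cs U F" using Y closure_of_subset_topspace sigma_topspace by fast
          then have UY: "U Y = F" unfolding Uinv_def by auto
          have "a \<in> Age_exp Cs U Obf Y" using H Y aS by blast
          then obtain e where e: "e \<in> Hom Cs a Y" unfolding Age_exp_def arr_def by auto
          then have "e \<in> Hom C A F" using exp_basic(2)[OF E, of a Y] Ua UY by auto
          then show "Y \<in> \<Union>(?N ` Hom C A F)" using e YU unfolding Nbhd_def by auto
        qed
        obtain FF where FF: "finite FF" "FF \<subseteq> ?N ` Hom C A F" "?cl \<subseteq> \<Union>FF"
          using clcomp op cov unfolding compactin_def by meson
        obtain EE where EE: "EE \<subseteq> Hom C A F" "finite EE" "FF = ?N ` EE"
          using finite_subset_image[OF FF(1,2)] by blast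
        have "\<forall>Y\<in>?cl. \<exists>e\<in>EE. e \<in> Hom Cs a Y"
          using FF(3) EE(3) unfolding Nbhd_def by auto
        then show ?thesis using EE by blast
      qed
      then have "\<forall>a\<in>?S. \<exists>EE. finite EE \<and> EE \<subseteq> Hom C A F \<and> (\<forall>Y\<in>?cl. \<exists>e\<in>EE. e \<in> Hom Cs a Y)"
        by blast
      from bchoice[OF this] obtain EEf where EEf0: "\<forall>a\<in>?S. finite (EEf a) \<and> EEf a \<subseteq> Hom C A F \<and>
           (\<forall>Y\<in>?cl. \<exists>e\<in>EEf a. e \<in> Hom Cs a Y)"
        by blast
      have EEf: "finite (EEf a) \<and> EEf a \<subseteq> Hom C A F \<and> (\<forall>Y\<in>?cl. \<exists>e\<in>EEf a. e \<in> Hom Cs a Y)"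
        if "a \<in> ?S" for a using EEf0 that by blast
      let ?EE = "\<Union>(EEf ` ?S)"
      have "finite ?EE" using finS EEf by blast
      moreover have "?EE \<subseteq> Hom C A F" using EEf by blast
      ultimately obtain B f where B: "B \<in> Obf" "f \<in> Hom C B F"
        and fac: "\<forall>e\<in>?EE. \<exists>p\<in>Hom C A B. e = comp C f p"
        using lf_iter[OF C LF AO e0] by blast
      have BA: "B \<in> Age C Obf F" using B unfolding Age_def arr_def by auto
      obtain a b where a: "a \<in> Age_exp Cs U Obf Fs" and b: "b \<in> Age_exp Cs U Obf Fs"
        and Ua: "U a = A" and Ub: "U b = B" and nab: "\<not> arr Cs a b"
        using nB BA by blast
      have aS: "a \<in> ?S" using a Ua by blast
      obtain h where h: "h \<in> Hom Cs b Fs" using b unfolding Age_exp_def arr_def by auto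
      have hC: "h \<in> Hom C B F" using h exp_basic(2)[OF E, of b Fs] Ub UFs by auto
      obtain g where g: "g \<in> Aut C F" "comp C g f = h"
      proof -
        have "\<forall>e1\<in>Hom C B F. \<forall>e2\<in>Hom C B F. \<exists>g\<in>Aut C F. comp C g e1 = e2"
          using HG B(1) unfolding homogeneous_def by blast
        then show ?thesis using that B(2) hC by blast
      qed
      let ?Z = "exp_act Cs U C Fs g"
      note Zp = exp_act_props[OF C E R UR FsU g(1)]
      note ai = aut_inv_props[OF C g(1)]
      have gH: "g \<in> Hom C F F" using g(1) unfolding Aut_def by blast
      have "comp C (aut_inv C F g) h = f"
      proof -
        have "comp C (aut_inv C F g) h = comp C (comp C (aut_inv C F g) g) f"
          using g(2) cat_assoc[OF C B(2) gH] ai by auto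
        also have "\<dots> = f" using ai cat_idl[OF C B(2)] by simp
        finally show ?thesis .
      qed
      moreover have "comp Cs (aut_inv C F g) h \<in> Hom Cs b ?Z" using cat_comp[OF Cs h] Zp by blast
      moreover have "comp Cs (aut_inv C F g) h = comp C (aut_inv C F g) h"
        using exp_basic(3)[OF E h] Zp by blast
      ultimately have fZ: "f \<in> Hom Cs b ?Z" by simp
      have "?Z \<in> ?O" using orb2[OF g(1)] .
      moreover have "?O \<subseteq> topspace ?X"
        unfolding sigma_topspace orbit_exp_def UFs
      proof (rule image_subsetI)
        fix g' assume "g' \<in> Aut C F"
        then show "exp_act Cs U C Fs g' \<in> Uinv Cs U F" using exp_act_props[OF C E R UR FsU] by blast
      qed
      ultimately have "?Z \<in> ?cl" using closure_of_subset by fast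
      then obtain e where e: "e \<in> EEf a" "e \<in> Hom Cs a ?Z" using EEf[OF aS] by blast
      obtain p where p: "p \<in> Hom C A B" "e = comp C f p" using fac e(1) aS by blast
      have bO: "b \<in> Ob Cs" using b unfolding Age_exp_def Ob_fin_exp_def by auto
      obtain a' where a': "a' \<in> Uinv Cs U A" "p \<in> Hom Cs a' b"
        using UR bO p(1) Ub unfolding unique_restrictions_def by metis
      have "comp Cs f p \<in> Hom Cs a' ?Z" using cat_comp[OF Cs a'(2) fZ] .
      moreover have "comp Cs f p = e" using exp_basic(3)[OF E a'(2) fZ] p(2) by simp
      ultimately have ea': "e \<in> Hom Cs a' ?Z" by simp
      have ZO: "?Z \<in> Ob Cs" "U ?Z = F" using Zp unfolding Uinv_def by auto
      have eC: "e \<in> Hom C A (U ?Z)" using e(2) exp_basic(2)[OF E, of a ?Z] Ua by auto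
      have "\<exists>!x. x \<in> Uinv Cs U A \<and> e \<in> Hom Cs x ?Z"
        using UR ZO(1) eC unfolding unique_restrictions_def by blast
      moreover have "a \<in> Uinv Cs U A" using a Ua unfolding Age_exp_def Ob_fin_exp_def Uinv_def by auto
      ultimately have "a = a'" using a' ea' e(2) by blast
      then have "arr Cs a b" using a'(2) unfolding arr_def by auto
      then show False using nab by simp
    qed
  qed
qed

end
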